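(* Assume (A1) and (A2). Fix integers $1\le s\le e\le T$ and set $n=e-s+1$. Then for every $x>0$, \[ \Pr\bigl(|\widehat C(s,e)-C(s,e)|>x\bigr)\le 4\exp\Bigl(-\frac{x^2}{8(8m+5)M^2\,n}\Bigr). \]
   Context: Let $Y_1,\dots,Y_T$ be random vectors in $\mathbb R^d$ and fix true change points $0=\tau_0<\tau_1<\dots<\tau_K<\tau_{K+1}=T$. Let $k:\mathbb R^d\times\mathbb R^d\to\mathbb R$ be a positive definite kernel with RKHS $\mathcal H$. For $1\le s\le e\le T$ define the empirical segment cost $\widehat C(s,e)=\sum_{t=s}^e k(Y_t,Y_t)-\frac{1}{e-s+1}\sum_{i=s}^e\sum_{j=s}^e k(Y_i,Y_j)$ and its expectation $C(s,e)=\mathbb E[\widehat C(s,e)]$. (A1) For a fixed integer $m\ge 0$, the sequence is $m$-dependent: for every $t$, $(Y_1,\dots,Y_t)$ is independent of $(Y_{t+m+1},\dots,Y_T)$; moreover for each $k=1,\dots,K+1$ the subsequence $(Y_t)_{\tau_{k-1}<t\le\tau_k}$ is strictly stationary with marginal distribution $P_k$. (A2) The kernel is bounded and characteristic: $0\le k(x,y)\le M<\infty$ for all $x,y$. *)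

theory Defs
  imports "HOL-Probability.Probability"
begin

definition Chat :: "('a \<Rightarrow> 'a \<Rightarrow> real) \<Rightarrow> (nat \<Rightarrow> 'w \<Rightarrow> 'a) \<Rightarrow> nat \<Rightarrow> nat \<Rightarrow> 'w \<Rightarrow> real" where
  "Chat k Y s e \<omega> =
     (\<Sum>t=s..e. k (Y t \<omega>) (Y t \<omega>))
     - (1 / real (e - s + 1)) * (\<Sum>i=s..e. \<Sum>j=s..e. k (Y i \<omega>) (Y j \<omega>))"

definition pos_def_kernel :: "('a \<Rightarrow> 'a \<Rightarrow> real) \<Rightarrow> bool" where
  "pos_def_kernel k \<longleftrightarrow> (\<forall>x y. k x y = k y x) \<and>
     (\<forall>n (x :: nat \<Rightarrow> 'a) (c :: nat \<Rightarrow> real).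
        (\<Sum>i<n. \<Sum>j<n. c i * c j * k (x i) (x j)) \<ge> 0)"

text \<open>Characteristic kernel: the kernel mean embedding is injective on Borel probability
  measures, i.e. the squared MMD
  \<open>\<parallel>\<mu>_P - \<mu>_Q\<parallel>\<^sup>2 = \<integral>\<integral>k dP dP + \<integral>\<integral>k dQ dQ - 2 \<integral>\<integral>k dP dQ\<close> vanishes only if P = Q.\<close>
definition characteristic_kernel :: "('a::topological_space \<Rightarrow> 'a \<Rightarrow> real) \<Rightarrow> bool" where
  "characteristic_kernel k \<longleftrightarrow>
     (\<forall>P Q. prob_space P \<longrightarrow> prob_space Q \<longrightarrow> sets P = sets borel \<longrightarrow> sets Q = sets borel \<longrightarrow>
        (\<integral>x. (\<integral>y. k x y \<partial>P) \<partial>P) + (\<integral>x. (\<integral>y. k x y \<partial>Q) \<partial>Q)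
          - 2 * (\<integral>x. (\<integral>y. k x y \<partial>Q) \<partial>P) = 0 \<longrightarrow> P = Q)"

end

theory Submission
  imports Defs
begin

lemma hoeff_real:
  fixes l lo w mu :: real
  assumes w: "w > 0" and m1: "lo \<le> mu" and m2: "mu \<le> lo + w"
  shows "exp (-l*mu) * (((lo + w - mu) * exp (l*lo) + (mu - lo) * exp (l*(lo+w))) / w)
          \<le> exp (l\<^sup>2 * w\<^sup>2 / 8)"
proof -
  define p where "p = (mu - lo) / w"
  have p0: "p \<ge> 0" and p1: "p \<le> 1" using w m1 m2 by (auto simp: p_def field_simps)
  have eq: "exp (-l*mu) * (((lo + w - mu) * exp (l*lo) + (mu - lo) * exp (l*(lo+w))) / w)
        = exp (-(l*w)*p) * (1 + p * (exp (l*w) - 1))"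
  proof -
    have "mu = lo + p * w" using w by (simp add: p_def)
    then show ?thesis using w
      by (simp add: field_simps exp_add[symmetric] exp_diff[symmetric] ring_distribs)
  qed
  show ?thesis
  proof (cases "l \<ge> 0")
    case True
    have pos: "1 + p * (exp (l*w) - 1) > 0"
      using p0 True w by (smt (verit) mult_nonneg_nonneg one_le_exp_iff zero_le_mult_iff)
    have "-(l*w)*p + ln (1 + p * (exp (l*w) - 1)) \<le> (l*w)\<^sup>2/8"
      by (rule Hoeffdings_lemma_aux) (use True w p0 in auto)
    hence "exp (-(l*w)*p + ln (1 + p * (exp (l*w) - 1))) \<le> exp ((l*w)\<^sup>2/8)" by (simp only: exp_le_cancel_iff)
    moreover have "exp (-(l*w)*p + ln (1 + p * (exp (l*w) - 1))) = exp (-(l*w)*p) * (1 + p * (exp (l*w) - 1))"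
      using pos by (simp only: exp_add exp_ln)
    ultimately have "exp (-(l*w)*p) * (1 + p * (exp (l*w) - 1)) \<le> exp ((l*w)\<^sup>2/8)" by linarith
    then show ?thesis unfolding eq by (simp add: power_mult_distrib)
  next
    case False
    define q where "q = 1 - p"
    define h where "h = -(l*w)"
    have q0: "q \<ge> 0" using p1 by (simp add: q_def)
    have h0: "h \<ge> 0" using False w by (simp add: h_def mult_nonpos_nonneg)
    have pos: "1 + q * (exp h - 1) > 0"
      using q0 h0 by (smt (verit) mult_nonneg_nonneg one_le_exp_iff zero_le_mult_iff)
    have "-h*q + ln (1 + q * (exp h - 1)) \<le> h\<^sup>2/8"
      by (rule Hoeffdings_lemma_aux) (use q0 h0 in auto)
    hence "exp (-h*q + ln (1 + q * (exp h - 1))) \<le> exp (h\<^sup>2/8)" by (simp only: exp_le_cancel_iff)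
    moreover have "exp (-h*q + ln (1 + q * (exp h - 1))) = exp (-h*q) * (1 + q * (exp h - 1))"
      using pos by (simp only: exp_add exp_ln)
    ultimately have "exp (-h*q) * (1 + q * (exp h - 1)) \<le> exp (h\<^sup>2/8)" by linarith
    moreover have "exp (-(l*w)*p) * (1 + p * (exp (l*w) - 1)) = exp (-h*q) * (1 + q * (exp h - 1))"
    proof -
      have e1: "exp (-h*q) = exp (l*w) * exp (-(l*w)*p)"
        by (simp add: h_def q_def exp_add[symmetric] algebra_simps)
      have e2: "exp h * exp (l*w) = 1" by (simp add: h_def exp_add[symmetric])
      have alg: "\<And>E X H::real. H * X = 1 \<Longrightarrow> X*E*(1 + (1-p)*(H - 1)) = E*(1 + p*(X-1))"
      proof -
        fix E X H :: real assume "H * X = 1"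
        have "X*E*(1 + (1-p)*(H - 1)) = X*E + (1-p)*E*(H*X) - (1-p)*X*E" by (simp add: algebra_simps)
        also have "\<dots> = E*(1 + p*(X-1))" using \<open>H * X = 1\<close> by (simp add: algebra_simps)
        finally show "X*E*(1 + (1-p)*(H - 1)) = E*(1 + p*(X-1))" .
      qed
      have "exp (-(l*w)*p) * (1 + p*(exp (l*w)-1)) = exp (l*w) * exp (-(l*w)*p) * (1 + (1-p)*(exp h - 1))"
        using alg[OF e2, of "exp (-(l*w)*p)"] by simp
      also have "\<dots> = exp (-h*q) * (1 + q*(exp h - 1))" by (subst e1) (simp only: q_def)
      finally show ?thesis .
    qed
    ultimately show ?thesis unfolding eq by (simp add: h_def power_mult_distrib)
  qed
qed

lemma exp_convex_bound:
  fixes l lo w u :: real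
  assumes w: "w > 0" and "lo \<le> u" "u \<le> lo + w"
  shows "exp (l*u) \<le> ((lo + w - u) * exp (l*lo) + (u - lo) * exp (l*(lo+w))) / w"
proof -
  define y where "y = (lo + w - u) / w"
  have y: "0 \<le> y" "y \<le> 1" using assms by (auto simp: y_def field_simps)
  have conv: "convex_on UNIV exp" using convex_on_exp[of 1] by simp
  have "exp ((1 - y) * (l*(lo+w)) + y * (l*lo)) \<le> (1 - y) * exp (l*(lo+w)) + y * exp (l*lo)"
    using convex_onD[OF conv, of y "l*(lo+w)" "l*lo"] y by (simp add: algebra_simps)
  moreover have "(1 - y) * (l*(lo+w)) + y * (l*lo) = l*u" using w by (simp add: y_def field_simps)
  moreover have "(1 - y) * exp (l*(lo+w)) + y * exp (l*lo) = ((lo + w - u) * exp (l*lo) + (u - lo) * exp (l*(lo+w))) / w"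
    using w by (simp add: y_def field_simps)
  ultimately show ?thesis by simp
qed

lemma exp_bounded_aux:
  fixes l mu lo w :: real
  assumes "lo \<le> mu" "mu \<le> lo + w" "0 \<le> w"
  shows "exp (l * mu) \<le> exp (\<bar>l\<bar> * (\<bar>lo\<bar> + w))"
proof -
  have "\<bar>mu\<bar> \<le> \<bar>lo\<bar> + w" using assms by linarith
  hence "\<bar>l\<bar> * \<bar>mu\<bar> \<le> \<bar>l\<bar> * (\<bar>lo\<bar> + w)" by (rule mult_left_mono) simp
  moreover have "l * mu \<le> \<bar>l\<bar> * \<bar>mu\<bar>" by (metis abs_ge_self abs_mult)
  ultimately have "l * mu \<le> \<bar>l\<bar> * (\<bar>lo\<bar> + w)" by linarith
  thus ?thesis by simp
qed

lemma (in prob_space) mg_step: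
  assumes subF: "subalgebra M F"
  and W[measurable]: "W \<in> borel_measurable F" and W0: "\<And>x. x \<in> space M \<Longrightarrow> 0 \<le> W x \<and> W x \<le> B"
  and U[measurable]: "U \<in> borel_measurable M" and Ub: "\<And>x. x \<in> space M \<Longrightarrow> lo \<le> U x \<and> U x \<le> lo + w"
  and mu[measurable]: "mu \<in> borel_measurable F" and mub: "\<And>x. x \<in> space M \<Longrightarrow> lo \<le> mu x \<and> mu x \<le> lo + w"
  and mue: "AE x in M. real_cond_exp M F U x = mu x"
  shows "(\<integral>x. W x * exp (l * (U x - mu x)) \<partial>M) \<le> (\<integral>x. W x \<partial>M) * exp (l\<^sup>2 * w\<^sup>2 / 8)"
proof -
  interpret FS: finite_measure_subalgebra M F
    by (simp add: finite_measure_subalgebra_def finite_measure_subalgebra_axioms_def subF finite_measure_axioms)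
  have WM[measurable]: "W \<in> borel_measurable M" by (rule measurable_from_subalg[OF subF W])
  have muM[measurable]: "mu \<in> borel_measurable M" by (rule measurable_from_subalg[OF subF mu])
  obtain x0 where x0: "x0 \<in> space M" using not_empty by blast
  have w0: "w \<ge> 0" using Ub[OF x0] by linarith
  have Wint: "integrable M W"
    by (rule integrable_const_bound[where B=B]) (auto simp: W0)
  show ?thesis
  proof (cases "w = 0")
    case True
    have "(\<integral>x. W x * exp (l * (U x - mu x)) \<partial>M) = (\<integral>x. W x \<partial>M)"
    proof (rule Bochner_Integration.integral_cong[OF refl])
      fix x assume x: "x \<in> space M"
      have "U x = mu x" using Ub[OF x] mub[OF x] True by linarith
      thus "W x * exp (l * (U x - mu x)) = W x" by simp
    qed
    thus ?thesis using True by simp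
  next
    case False
    hence w: "w > 0" using w0 by simp
    define E where "E = exp (\<bar>l\<bar> * (\<bar>lo\<bar> + w))"
    define g where "g = (\<lambda>x. W x * exp (-l * mu x) / w)"
    define A0 where "A0 = ((lo + w) * exp (l*lo) - lo * exp (l*(lo+w))) / 1"
    define C where "C = exp (l*(lo+w)) - exp (l*lo)"
    have gF[measurable]: "g \<in> borel_measurable F" unfolding g_def by measurable
    have gM[measurable]: "g \<in> borel_measurable M" unfolding g_def by measurable
    have gb: "\<bar>g x\<bar> \<le> B * E / w" if x: "x \<in> space M" for x
    proof -
      have e: "exp (-l * mu x) \<le> E" unfolding E_def
        using exp_bounded_aux[of lo "mu x" w "-l"] mub[OF x] w0 by simp
      have "\<bar>g x\<bar> = W x * exp (-l * mu x) / w" using W0[OF x] w by (simp add: g_def)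
      also have "\<dots> \<le> B * E / w" using W0[OF x] e w
        by (intro divide_right_mono mult_mono) auto
      finally show ?thesis .
    qed
    have gint: "integrable M g"
      by (rule integrable_const_bound[where B="B * E / w"]) (auto simp: gb)
    have gU: "integrable M (\<lambda>x. g x * U x)"
    proof (rule integrable_const_bound[where B="B * E / w * (\<bar>lo\<bar> + w)"])
      show "AE x in M. norm (g x * U x) \<le> B * E / w * (\<bar>lo\<bar> + w)"
      proof (rule AE_I2)
        fix x assume x: "x \<in> space M"
        have "\<bar>U x\<bar> \<le> \<bar>lo\<bar> + w" using Ub[OF x] w0 by linarith
        hence "\<bar>g x\<bar> * \<bar>U x\<bar> \<le> B * E / w * (\<bar>lo\<bar> + w)"
          using gb[OF x] by (intro mult_mono) auto
        thus "norm (g x * U x) \<le> B * E / w * (\<bar>lo\<bar> + w)"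
          by (simp add: abs_mult)
      qed
    qed simp
    have gmu: "integrable M (\<lambda>x. g x * mu x)"
    proof (rule integrable_const_bound[where B="B * E / w * (\<bar>lo\<bar> + w)"])
      show "AE x in M. norm (g x * mu x) \<le> B * E / w * (\<bar>lo\<bar> + w)"
      proof (rule AE_I2)
        fix x assume x: "x \<in> space M"
        have "\<bar>mu x\<bar> \<le> \<bar>lo\<bar> + w" using mub[OF x] w0 by linarith
        hence "\<bar>g x\<bar> * \<bar>mu x\<bar> \<le> B * E / w * (\<bar>lo\<bar> + w)"
          using gb[OF x] by (intro mult_mono) auto
        thus "norm (g x * mu x) \<le> B * E / w * (\<bar>lo\<bar> + w)"
          by (simp add: abs_mult)
      qed
    qed simp
    have i1: "integrable M (\<lambda>x. W x * exp (l * (U x - mu x)))"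
    proof (rule integrable_const_bound[where B="B * (E * E)"])
      show "AE x in M. norm (W x * exp (l * (U x - mu x))) \<le> B * (E * E)"
      proof (rule AE_I2)
        fix x assume x: "x \<in> space M"
        have e1: "exp (l * U x) \<le> E" unfolding E_def
          using exp_bounded_aux[of lo "U x" w "l"] Ub[OF x] w0 by simp
        have e2: "exp (-l * mu x) \<le> E" unfolding E_def
          using exp_bounded_aux[of lo "mu x" w "-l"] mub[OF x] w0 by simp
        have "exp (l * (U x - mu x)) = exp (l * U x) * exp (-l * mu x)"
          by (simp add: exp_add[symmetric] algebra_simps)
        also have "\<dots> \<le> E * E" using e1 e2 by (intro mult_mono) (auto simp: E_def)
        finally show "norm (W x * exp (l * (U x - mu x))) \<le> B * (E * E)"
          using W0[OF x] by (simp add: abs_mult) (intro mult_mono, auto)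
      qed
    qed simp
    have "(\<integral>x. W x * exp (l * (U x - mu x)) \<partial>M) \<le> (\<integral>x. g x * (A0 + C * U x) \<partial>M)"
    proof (rule integral_mono)
      have "integrable M (\<lambda>x. A0 * g x + C * (g x * U x))"
        by (intro Bochner_Integration.integrable_add integrable_mult_right gint gU)
      thus "integrable M (\<lambda>x. g x * (A0 + C * U x))"
        by (simp add: algebra_simps)
      fix x assume x: "x \<in> space M"
      have cb: "exp (l * U x) \<le> ((lo + w - U x) * exp (l*lo) + (U x - lo) * exp (l*(lo+w))) / w"
        using exp_convex_bound[OF w, of lo "U x" l] Ub[OF x] by simp
      have "W x * exp (l * (U x - mu x)) = (W x * exp (-l * mu x)) * exp (l * U x)"
        by (simp add: exp_add[symmetric] algebra_simps)
      also have "\<dots> \<le> (W x * exp (-l * mu x)) * (((lo + w - U x) * exp (l*lo) + (U x - lo) * exp (l*(lo+w))) / w)"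
        using W0[OF x] cb by (intro mult_left_mono) auto
      also have "\<dots> = g x * (A0 + C * U x)"
        unfolding g_def A0_def C_def by (simp add: field_simps)
      finally show "W x * exp (l * (U x - mu x)) \<le> g x * (A0 + C * U x)" .
    qed (rule i1)
    also have "\<dots> = (\<integral>x. A0 * g x + C * (g x * U x) \<partial>M)"
      by (simp add: algebra_simps)
    also have "\<dots> = A0 * (\<integral>x. g x \<partial>M) + C * (\<integral>x. g x * U x \<partial>M)"
      using gint gU by simp
    also have "(\<integral>x. g x * U x \<partial>M) = (\<integral>x. g x * real_cond_exp M F U x \<partial>M)"
      by (rule FS.real_cond_exp_intg(2)[symmetric]) (use gU in auto)
    also have "\<dots> = (\<integral>x. g x * mu x \<partial>M)"
      by (rule integral_cong_AE) (use mue in auto)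
    also have "A0 * (\<integral>x. g x \<partial>M) + C * (\<integral>x. g x * mu x \<partial>M) = (\<integral>x. A0 * g x + C * (g x * mu x) \<partial>M)"
      using gint gmu by simp
    also have "\<dots> = (\<integral>x. g x * (A0 + C * mu x) \<partial>M)"
      by (simp add: algebra_simps)
    also have "\<dots> \<le> (\<integral>x. W x * exp (l\<^sup>2 * w\<^sup>2 / 8) \<partial>M)"
    proof (rule integral_mono)
      have "integrable M (\<lambda>x. A0 * g x + C * (g x * mu x))"
        by (intro Bochner_Integration.integrable_add integrable_mult_right gint gmu)
      thus "integrable M (\<lambda>x. g x * (A0 + C * mu x))"
        by (simp add: algebra_simps)
      show "integrable M (\<lambda>x. W x * exp (l\<^sup>2 * w\<^sup>2 / 8))" using Wint by simp
      fix x assume x: "x \<in> space M"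
      have "g x * (A0 + C * mu x) = W x * (exp (-l * mu x) * (((lo + w - mu x) * exp (l*lo) + (mu x - lo) * exp (l*(lo+w))) / w))"
        unfolding g_def A0_def C_def using w by (simp add: field_simps)
      also have "\<dots> \<le> W x * exp (l\<^sup>2 * w\<^sup>2 / 8)"
        using hoeff_real[OF w, of lo "mu x" l] mub[OF x] W0[OF x] by (intro mult_left_mono) auto
      finally show "g x * (A0 + C * mu x) \<le> W x * exp (l\<^sup>2 * w\<^sup>2 / 8)" .
    qed
    also have "\<dots> = (\<integral>x. W x \<partial>M) * exp (l\<^sup>2 * w\<^sup>2 / 8)" by simp
    finally show ?thesis .
  qed
qed

lemma (in prob_space) subalg_vimage:
  assumes X: "X \<in> measurable M SX"
  shows "subalgebra M (vimage_algebra (space M) X SX)"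
  unfolding subalgebra_def using sets_image_in_sets[OF refl X] by simp

lemma (in prob_space) freeze:
  assumes X[measurable]: "X \<in> measurable M SX" and Z[measurable]: "Z \<in> measurable M SZ"
  and ind: "indep_var SX X SZ Z"
  and phi[measurable]: "case_prod phi \<in> borel_measurable (SX \<Otimes>\<^sub>M SZ)"
  and bnd: "\<And>x z. \<bar>phi x z\<bar> \<le> B"
  shows "AE \<omega> in M. real_cond_exp M (vimage_algebra (space M) X SX) (\<lambda>\<omega>. phi (X \<omega>) (Z \<omega>)) \<omega>
            = (\<integral>z. phi (X \<omega>) z \<partial>distr M SZ Z)"
proof -
  define G where "G = vimage_algebra (space M) X SX"
  have subG: "subalgebra M G" unfolding G_def by (rule subalg_vimage[OF X])
  interpret FS: finite_measure_subalgebra M G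
    by (simp add: finite_measure_subalgebra_def finite_measure_subalgebra_axioms_def subG finite_measure_axioms)
  define MX where "MX = distr M SX X"
  define MZ where "MZ = distr M SZ Z"
  interpret PX: prob_space MX unfolding MX_def by (rule prob_space_distr[OF X])
  interpret PZ: prob_space MZ unfolding MZ_def by (rule prob_space_distr[OF Z])
  interpret PXZ: pair_prob_space MX MZ ..
  have sMX[simp]: "sets MX = sets SX" unfolding MX_def by simp
  have sMZ[simp]: "sets MZ = sets SZ" unfolding MZ_def by simp
  have phi2[measurable]: "case_prod phi \<in> borel_measurable (MX \<Otimes>\<^sub>M MZ)"
    using phi by (simp add: measurable_cong_sets[OF sets_pair_measure_cong[OF sMX sMZ] refl])
  have phi3[measurable]: "case_prod phi \<in> borel_measurable (SX \<Otimes>\<^sub>M MZ)"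
    using phi by (simp add: measurable_cong_sets[OF sets_pair_measure_cong[OF refl sMZ] refl])
  define psi where "psi = (\<lambda>x. \<integral>z. phi x z \<partial>MZ)"
  have psi[measurable]: "psi \<in> borel_measurable SX"
    unfolding psi_def by (rule PZ.borel_measurable_lebesgue_integral[OF phi3])
  have psib: "\<bar>psi x\<bar> \<le> B" if xs: "x \<in> space SX" for x
  proof -
    have "\<bar>psi x\<bar> \<le> (\<integral>z. \<bar>phi x z\<bar> \<partial>MZ)" unfolding psi_def by (rule integral_abs_bound)
    also have "\<dots> \<le> (\<integral>z. B \<partial>MZ)"
    proof (rule integral_mono)
      have pm: "(\<lambda>z. phi x z) \<in> borel_measurable MZ" using measurable_Pair2[OF phi3 xs] by simp
      have "integrable MZ (\<lambda>z. phi x z)"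
        by (rule PZ.integrable_const_bound[where B=B]) (auto simp: bnd pm)
      thus "integrable MZ (\<lambda>z. \<bar>phi x z\<bar>)" by (rule integrable_abs)
    qed (auto simp: bnd)
    finally show ?thesis by (simp add: PZ.prob_space)
  qed
  have XG: "X \<in> measurable G SX"
    unfolding G_def by (rule measurable_vimage_algebra1) (use measurable_space[OF X] in blast)
  have psiG: "(\<lambda>\<omega>. psi (X \<omega>)) \<in> borel_measurable G"
    using measurable_comp[OF XG psi] by (simp add: comp_def)
  have dXZ: "distr M (SX \<Otimes>\<^sub>M SZ) (\<lambda>x. (X x, Z x)) = MX \<Otimes>\<^sub>M MZ"
    using ind unfolding indep_var_distribution_eq MX_def MZ_def by simp
  have "AE \<omega> in M. real_cond_exp M G (\<lambda>\<omega>. phi (X \<omega>) (Z \<omega>)) \<omega> = psi (X \<omega>)"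
  proof (rule FS.real_cond_exp_charact)
    show "integrable M (\<lambda>\<omega>. phi (X \<omega>) (Z \<omega>))"
      by (rule integrable_const_bound[where B=B]) (auto simp: bnd)
    show "integrable M (\<lambda>\<omega>. psi (X \<omega>))"
      by (rule integrable_const_bound[where B=B]) (auto simp: psib measurable_space[OF X])
    show "(\<lambda>\<omega>. psi (X \<omega>)) \<in> borel_measurable G" by (rule psiG)
    fix A assume A: "A \<in> sets G"
    then obtain C where C: "C \<in> sets SX" and AC: "A = X -` C \<inter> space M"
      unfolding G_def using sets_vimage_algebra2[of X "space M" SX] measurable_space[OF X] by auto
    have "(\<integral>\<omega>\<in>A. phi (X \<omega>) (Z \<omega>) \<partial>M) = (\<integral>\<omega>. (\<lambda>(x,z). indicator C x * phi x z) (X \<omega>, Z \<omega>) \<partial>M)"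
      unfolding set_lebesgue_integral_def AC
      by (rule Bochner_Integration.integral_cong[OF refl]) (auto simp: indicator_def)
    also have "\<dots> = (\<integral>p. (\<lambda>(x,z). indicator C x * phi x z) p \<partial>distr M (SX \<Otimes>\<^sub>M SZ) (\<lambda>x. (X x, Z x)))"
      by (rule integral_distr[symmetric]) (use C in auto)
    also have "\<dots> = (\<integral>p. (\<lambda>(x,z). indicator C x * phi x z) p \<partial>(MX \<Otimes>\<^sub>M MZ))"
      by (simp add: dXZ)
    also have "\<dots> = (\<integral>x. (\<integral>z. (\<lambda>(x,z). indicator C x * phi x z) (x, z) \<partial>MZ) \<partial>MX)"
    proof (rule PXZ.integral_fst'[symmetric])
      show "integrable (MX \<Otimes>\<^sub>M MZ) (\<lambda>(x,z). indicator C x * phi x z)"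
      proof (rule PXZ.P.integrable_const_bound[where B=B])
        have [measurable]: "C \<in> sets MX" using C by simp
        show "(\<lambda>(x,z). indicator C x * phi x z) \<in> borel_measurable (MX \<Otimes>\<^sub>M MZ)"
          by measurable
        have B0: "0 \<le> B" using bnd[of undefined undefined] by linarith
        show "AE p in MX \<Otimes>\<^sub>M MZ. norm ((\<lambda>(x,z). indicator C x * phi x z) p) \<le> B"
          by (rule AE_I2) (auto simp: indicator_def bnd B0)
      qed
    qed
    also have "\<dots> = (\<integral>x. indicator C x * psi x \<partial>MX)"
      by (simp add: psi_def)
    also have "\<dots> = (\<integral>\<omega>. indicator C (X \<omega>) * psi (X \<omega>) \<partial>M)"
      unfolding MX_def by (rule integral_distr) (use C in auto)
    also have "\<dots> = (\<integral>\<omega>\<in>A. psi (X \<omega>) \<partial>M)"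
      unfolding set_lebesgue_integral_def AC
      by (rule Bochner_Integration.integral_cong[OF refl]) (auto simp: indicator_def)
    finally show "(\<integral>\<omega>\<in>A. phi (X \<omega>) (Z \<omega>) \<partial>M) = (\<integral>\<omega>\<in>A. psi (X \<omega>) \<partial>M)" .
  qed
  thus ?thesis unfolding G_def psi_def MZ_def .
qed

definition clip :: "real \<Rightarrow> real \<Rightarrow> real \<Rightarrow> real" where
  "clip lo hi v = max lo (min hi v)"

lemma clip_bounds: "lo \<le> hi \<Longrightarrow> lo \<le> clip lo hi v \<and> clip lo hi v \<le> hi"
  by (auto simp: clip_def)

lemma clip_id: "lo \<le> v \<Longrightarrow> v \<le> hi \<Longrightarrow> clip lo hi v = v"
  by (auto simp: clip_def)

lemma measurable_clip[measurable]:
  "f \<in> borel_measurable N \<Longrightarrow> (\<lambda>x. clip lo hi (f x)) \<in> borel_measurable N"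
  unfolding clip_def by (intro borel_measurable_max borel_measurable_min measurable_const) auto

lemma (in prob_space) cond_exp_clip:
  assumes subF: "subalgebra M F" and f[measurable]: "f \<in> borel_measurable M"
  and fb: "\<And>x. x \<in> space M \<Longrightarrow> lo \<le> f x \<and> f x \<le> hi"
  shows "AE x in M. clip lo hi (real_cond_exp M F f x) = real_cond_exp M F f x"
proof -
  interpret FS: finite_measure_subalgebra M F
    by (simp add: finite_measure_subalgebra_def finite_measure_subalgebra_axioms_def subF finite_measure_axioms)
  have B0: "integrable M f"
    by (rule integrable_const_bound[where B="\<bar>lo\<bar> + \<bar>hi\<bar>"]) (auto dest!: fb)
  have "AE x in M. real_cond_exp M F f x \<ge> lo"
    by (rule FS.real_cond_exp_ge_c[OF B0]) (auto simp: fb)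
  moreover have "AE x in M. real_cond_exp M F f x \<le> hi"
    by (rule FS.real_cond_exp_le_c[OF B0]) (auto simp: fb)
  ultimately show ?thesis by eventually_elim (simp add: clip_id)
qed

lemma (in prob_space) mg_bound:
  fixes G :: "nat \<Rightarrow> 'a measure" and H J :: "nat \<Rightarrow> 'a \<Rightarrow> real" and lo w :: "nat \<Rightarrow> real"
  assumes subG: "\<And>a. a \<le> N \<Longrightarrow> subalgebra M (G a)"
  and nest: "\<And>a b. a \<le> b \<Longrightarrow> b \<le> N \<Longrightarrow> sets (G a) \<subseteq> sets (G b)"
  and triv: "\<And>A. A \<in> sets (G 0) \<Longrightarrow> A = {} \<or> A = space M"
  and f[measurable]: "f \<in> borel_measurable (G N)" and fb: "\<And>x. x \<in> space M \<Longrightarrow> \<bar>f x\<bar> \<le> Bf"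
  and H[measurable]: "\<And>a. H a \<in> borel_measurable M"
  and Hb: "\<And>a x. a \<in> {1..N} \<Longrightarrow> x \<in> space M \<Longrightarrow> lo a \<le> H a x \<and> H a x \<le> lo a + w a"
  and J[measurable]: "\<And>a. J a \<in> borel_measurable M" and Jb: "\<And>a x. x \<in> space M \<Longrightarrow> \<bar>J a x\<bar> \<le> BJ"
  and fHJ: "\<And>a x. a \<in> {1..N} \<Longrightarrow> x \<in> space M \<Longrightarrow> f x = H a x + J a x"
  and Jce: "\<And>a. a \<in> {1..N} \<Longrightarrow>
     AE x in M. real_cond_exp M (G a) (J a) x = real_cond_exp M (G (a-1)) (J a) x"
  shows "(\<integral>x. exp (l * (f x - expectation f)) \<partial>M) \<le> exp (l\<^sup>2 * (\<Sum>a=1..N. (w a)\<^sup>2) / 8)"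
proof -
  have fM[measurable]: "f \<in> borel_measurable M" by (rule measurable_from_subalg[OF subG[OF order.refl] f])
  obtain x0 where x0: "x0 \<in> space M" using not_empty by blast
  have Bf0: "Bf \<ge> 0" using fb[OF x0] by linarith
  have fbb: "-Bf \<le> f x \<and> f x \<le> Bf" if "x \<in> space M" for x using fb[OF that] by linarith
  have fint: "integrable M f"
    by (rule integrable_const_bound[where B=Bf]) (auto simp: fb)
  define Mc where "Mc = (\<lambda>a x. clip (-Bf) Bf (real_cond_exp M (G a) f x))"
  have McG[measurable]: "Mc a \<in> borel_measurable (G a)" for a unfolding Mc_def by measurable
  have McM[measurable]: "Mc a \<in> borel_measurable M" if "a \<le> N" for a
    by (rule measurable_from_subalg[OF subG[OF that] McG])
  have Mcb: "-Bf \<le> Mc a x \<and> Mc a x \<le> Bf" for a x unfolding Mc_def using clip_bounds Bf0 by simp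
  have McAE: "AE x in M. Mc a x = real_cond_exp M (G a) f x" if "a \<le> N" for a
    unfolding Mc_def by (rule cond_exp_clip[OF subG[OF that] fM fbb])
  have Mc0: "Mc 0 x = expectation f" if x: "x \<in> space M" for x
  proof -
    have sp: "space (G 0) = space M" using subG[of 0] by (simp add: subalgebra_def)
    have "Mc 0 -` {Mc 0 x0} \<inter> space (G 0) \<in> sets (G 0)"
      by (rule measurable_sets[OF McG]) simp
    hence "Mc 0 -` {Mc 0 x0} \<inter> space M \<in> sets (G 0)" by (simp add: sp)
    then have "Mc 0 -` {Mc 0 x0} \<inter> space M = space M" using triv x0 by blast
    hence const: "\<And>y. y \<in> space M \<Longrightarrow> Mc 0 y = Mc 0 x0" by blast
    interpret FS0: finite_measure_subalgebra M "G 0"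
      by (simp add: finite_measure_subalgebra_def finite_measure_subalgebra_axioms_def subG finite_measure_axioms)
    have "expectation f = (\<integral>y. real_cond_exp M (G 0) f y \<partial>M)"
      using FS0.real_cond_exp_int(2)[OF fint] by simp
    also have "\<dots> = (\<integral>y. Mc 0 y \<partial>M)"
      by (rule integral_cong_AE) (use McAE[of 0] in auto)
    also have "\<dots> = (\<integral>y. Mc 0 x0 \<partial>M)"
      by (rule Bochner_Integration.integral_cong[OF refl]) (simp add: const)
    also have "\<dots> = Mc 0 x0" by (simp add: prob_space)
    finally show ?thesis using const[OF x] by simp
  qed
  have ind: "(\<integral>x. exp (l * (Mc a x - Mc 0 x)) \<partial>M) \<le> exp (l\<^sup>2 * (\<Sum>b=1..a. (w b)\<^sup>2) / 8)"
    if "a \<le> N" for a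
    using that
  proof (induction a)
    case 0
    then show ?case by (simp add: prob_space)
  next
    case (Suc a)
    have aN: "a \<le> N" "Suc a \<le> N" using Suc.prems by auto
    have a1: "Suc a \<in> {1..N}" using aN by simp
    interpret FSa: finite_measure_subalgebra M "G a"
      by (simp add: finite_measure_subalgebra_def finite_measure_subalgebra_axioms_def subG aN finite_measure_axioms)
    interpret FSb: finite_measure_subalgebra M "G (Suc a)"
      by (simp add: finite_measure_subalgebra_def finite_measure_subalgebra_axioms_def subG aN finite_measure_axioms)
    have subab: "subalgebra (G (Suc a)) (G a)"
      using subG[OF aN(1)] subG[OF aN(2)] nest[of a "Suc a"] aN unfolding subalgebra_def by auto
    define lo' where "lo' = lo (Suc a)"
    define w' where "w' = w (Suc a)"
    have Hb': "lo' \<le> H (Suc a) x \<and> H (Suc a) x \<le> lo' + w'" if "x \<in> space M" for x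
      unfolding lo'_def w'_def using Hb[OF a1 that] .
    have w0: "w' \<ge> 0" using Hb'[OF x0] by linarith
    have Hint: "integrable M (H (Suc a))"
      by (rule integrable_const_bound[where B="\<bar>lo'\<bar> + \<bar>w'\<bar>"]) (auto dest!: Hb')
    have Jint: "integrable M (J (Suc a))"
      by (rule integrable_const_bound[where B="BJ"]) (auto simp: Jb)
    define U where "U = (\<lambda>x. clip lo' (lo' + w') (real_cond_exp M (G (Suc a)) (H (Suc a)) x))"
    have UG[measurable]: "U \<in> borel_measurable (G (Suc a))" unfolding U_def by measurable
    have UM[measurable]: "U \<in> borel_measurable M" by (rule measurable_from_subalg[OF subG[OF aN(2)] UG])
    have Ub: "lo' \<le> U x \<and> U x \<le> lo' + w'" for x unfolding U_def using clip_bounds w0 by simp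
    have UAE: "AE x in M. U x = real_cond_exp M (G (Suc a)) (H (Suc a)) x"
      unfolding U_def by (rule cond_exp_clip[OF subG[OF aN(2)] H Hb'])
    define mu where "mu = (\<lambda>x. clip lo' (lo' + w') (real_cond_exp M (G a) U x))"
    have muG[measurable]: "mu \<in> borel_measurable (G a)" unfolding mu_def by measurable
    have mub: "lo' \<le> mu x \<and> mu x \<le> lo' + w'" for x unfolding mu_def using clip_bounds w0 by simp
    have muAE: "AE x in M. real_cond_exp M (G a) U x = mu x"
      using cond_exp_clip[OF subG[OF aN(1)] UM, of lo' "lo' + w'"] Ub unfolding mu_def by (auto elim: AE_mp)
    have e1: "AE x in M. real_cond_exp M (G (Suc a)) f x
        = real_cond_exp M (G (Suc a)) (H (Suc a)) x + real_cond_exp M (G (Suc a)) (J (Suc a)) x"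
    proof -
      have "AE x in M. real_cond_exp M (G (Suc a)) f x = real_cond_exp M (G (Suc a)) (\<lambda>x. H (Suc a) x + J (Suc a) x) x"
        by (rule FSb.real_cond_exp_cong) (auto simp: fHJ[OF a1])
      moreover have "AE x in M. real_cond_exp M (G (Suc a)) (\<lambda>x. H (Suc a) x + J (Suc a) x) x
          = real_cond_exp M (G (Suc a)) (H (Suc a)) x + real_cond_exp M (G (Suc a)) (J (Suc a)) x"
        by (rule FSb.real_cond_exp_add[OF Hint Jint])
      ultimately show ?thesis by eventually_elim simp
    qed
    have e2: "AE x in M. real_cond_exp M (G a) f x
        = real_cond_exp M (G a) (H (Suc a)) x + real_cond_exp M (G a) (J (Suc a)) x"
    proof -
      have "AE x in M. real_cond_exp M (G a) f x = real_cond_exp M (G a) (\<lambda>x. H (Suc a) x + J (Suc a) x) x"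
        by (rule FSa.real_cond_exp_cong) (auto simp: fHJ[OF a1])
      moreover have "AE x in M. real_cond_exp M (G a) (\<lambda>x. H (Suc a) x + J (Suc a) x) x
          = real_cond_exp M (G a) (H (Suc a)) x + real_cond_exp M (G a) (J (Suc a)) x"
        by (rule FSa.real_cond_exp_add[OF Hint Jint])
      ultimately show ?thesis by eventually_elim simp
    qed
    have e3: "AE x in M. real_cond_exp M (G (Suc a)) (J (Suc a)) x = real_cond_exp M (G a) (J (Suc a)) x"
      using Jce[OF a1] by simp
    have e4: "AE x in M. real_cond_exp M (G a) (H (Suc a)) x = mu x"
    proof -
      have "AE x in M. real_cond_exp M (G a) (real_cond_exp M (G (Suc a)) (H (Suc a))) x = real_cond_exp M (G a) (H (Suc a)) x"
        by (rule FSa.real_cond_exp_nested_subalg[OF subG[OF aN(2)] subab Hint])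
      moreover have "AE x in M. real_cond_exp M (G a) (real_cond_exp M (G (Suc a)) (H (Suc a))) x = real_cond_exp M (G a) U x"
        by (rule FSa.real_cond_exp_cong) (use UAE in auto)
      ultimately show ?thesis using muAE by eventually_elim simp
    qed
    have incr: "AE x in M. Mc (Suc a) x - Mc 0 x = (Mc a x - Mc 0 x) + (U x - mu x)"
      using McAE[OF aN(1)] McAE[OF aN(2)] e1 e2 e3 e4 UAE by eventually_elim simp
    define W where "W = (\<lambda>x. exp (l * (Mc a x - Mc 0 x)))"
    have WG[measurable]: "W \<in> borel_measurable (G a)"
    proof -
      have "subalgebra (G a) (G 0)"
        using nest[of 0 a] aN subG[OF aN(1)] subG[of 0] by (auto simp: subalgebra_def)
      from measurable_from_subalg[OF this McG]
      have "Mc 0 \<in> borel_measurable (G a)" .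
      then show ?thesis unfolding W_def by measurable
    qed
    have Wb: "0 \<le> W x \<and> W x \<le> exp (\<bar>l\<bar> * (2 * Bf))" for x
    proof -
      have "\<bar>Mc a x - Mc 0 x\<bar> \<le> 2 * Bf" using Mcb[of a x] Mcb[of 0 x] by linarith
      hence "l * (Mc a x - Mc 0 x) \<le> \<bar>l\<bar> * (2 * Bf)"
        by (metis abs_ge_self abs_ge_zero abs_mult mult_left_mono order.trans)
      thus ?thesis unfolding W_def by simp
    qed
    have "(\<integral>x. exp (l * (Mc (Suc a) x - Mc 0 x)) \<partial>M) = (\<integral>x. W x * exp (l * (U x - mu x)) \<partial>M)"
    proof (rule integral_cong_AE)
      have [measurable]: "Mc (Suc a) \<in> borel_measurable M" "Mc a \<in> borel_measurable M" "Mc 0 \<in> borel_measurable M"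
        using McM aN by auto
      have [measurable]: "mu \<in> borel_measurable M" by (rule measurable_from_subalg[OF subG[OF aN(1)] muG])
      show "(\<lambda>x. exp (l * (Mc (Suc a) x - Mc 0 x))) \<in> borel_measurable M" by measurable
      show "(\<lambda>x. W x * exp (l * (U x - mu x))) \<in> borel_measurable M" unfolding W_def by measurable
      show "AE x in M. exp (l * (Mc (Suc a) x - Mc 0 x)) = W x * exp (l * (U x - mu x))"
        using incr by eventually_elim (simp only: W_def exp_add[symmetric] distrib_left[symmetric])
    qed
    also have "\<dots> \<le> (\<integral>x. W x \<partial>M) * exp (l\<^sup>2 * w'\<^sup>2 / 8)"
      by (rule mg_step[OF subG[OF aN(1)] WG _ UM _ muG _ muAE]) (use Wb Ub mub in auto)
    also have "\<dots> \<le> exp (l\<^sup>2 * (\<Sum>b=1..a. (w b)\<^sup>2) / 8) * exp (l\<^sup>2 * w'\<^sup>2 / 8)"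
      using Suc.IH aN by (simp add: W_def)
    also have "\<dots> = exp (l\<^sup>2 * (\<Sum>b=1..Suc a. (w b)\<^sup>2) / 8)"
      by (simp add: exp_add[symmetric] w'_def add_divide_distrib distrib_left)
    finally show ?case .
  qed
  have "(\<integral>x. exp (l * (f x - expectation f)) \<partial>M) = (\<integral>x. exp (l * (Mc N x - Mc 0 x)) \<partial>M)"
  proof (rule integral_cong_AE)
    interpret FSN: finite_measure_subalgebra M "G N"
      by (simp add: finite_measure_subalgebra_def finite_measure_subalgebra_axioms_def subG finite_measure_axioms)
    have "AE x in M. real_cond_exp M (G N) f x = f x"
      by (rule FSN.real_cond_exp_F_meas[OF fint f])
    moreover have "AE x in M. x \<in> space M" by simp
    ultimately show "AE x in M. exp (l * (f x - expectation f)) = exp (l * (Mc N x - Mc 0 x))"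
      using McAE[OF order.refl] by eventually_elim (simp add: Mc0)
  qed (use McM in auto)
  also have "\<dots> \<le> exp (l\<^sup>2 * (\<Sum>a=1..N. (w a)\<^sup>2) / 8)" by (rule ind) simp
  finally show ?thesis .
qed

definition KS :: "('b \<Rightarrow> 'b \<Rightarrow> real) \<Rightarrow> nat set \<Rightarrow> real \<Rightarrow> (nat \<Rightarrow> 'b) \<Rightarrow> real" where
  "KS k D c y = (\<Sum>t\<in>D. k (y t) (y t)) - (1 / c) * (\<Sum>i\<in>D. \<Sum>j\<in>D. k (y i) (y j))"

lemma KS_cong: "(\<And>t. t \<in> D \<Longrightarrow> y t = y' t) \<Longrightarrow> KS k D c y = KS k D c y'"
  unfolding KS_def by (intro arg_cong2[where f="(-)"] arg_cong2[where f="(*)"] sum.cong refl) auto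

lemma Chat_KS: "Chat k Y s e \<omega> = KS k {s..e} (real (e - s + 1)) (\<lambda>t. Y t \<omega>)"
  unfolding Chat_def KS_def by simp

lemma KS_meas:
  fixes k :: "'b::topological_space \<Rightarrow> 'b \<Rightarrow> real"
  assumes k: "case_prod k \<in> borel_measurable (borel \<Otimes>\<^sub>M borel)" and D: "finite D"
  and g: "\<And>t. t \<in> D \<Longrightarrow> (\<lambda>x. g x t) \<in> borel_measurable N"
  shows "(\<lambda>x. KS k D c (g x)) \<in> borel_measurable N"
proof -
  have kk: "(\<lambda>x. k (g x i) (g x j)) \<in> borel_measurable N" if "i \<in> D" "j \<in> D" for i j
  proof -
    have "(\<lambda>x. (g x i, g x j)) \<in> measurable N (borel \<Otimes>\<^sub>M borel)"
      using g that by (intro measurable_Pair) auto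
    from measurable_comp[OF this k] show ?thesis by (simp add: comp_def)
  qed
  show ?thesis unfolding KS_def
    by (intro borel_measurable_diff borel_measurable_times borel_measurable_sum borel_measurable_const kk) auto
qed

lemma KS_bound:
  assumes kb: "\<And>u v. 0 \<le> k u v \<and> k u v \<le> Mk" and c: "c > 0"
  shows "\<bar>KS k D c y\<bar> \<le> real (card D) * Mk + real (card D) * real (card D) * Mk / c"
proof -
  have s1: "0 \<le> (\<Sum>t\<in>D. k (y t) (y t))" "(\<Sum>t\<in>D. k (y t) (y t)) \<le> real (card D) * Mk"
    using kb by (auto intro: sum_nonneg sum_bounded_above[where K=Mk, simplified])
  have s2': "(\<Sum>j\<in>D. k (y i) (y j)) \<le> real (card D) * Mk" for i
    using kb by (auto intro: sum_bounded_above[where K=Mk, simplified])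
  have s2: "0 \<le> (\<Sum>i\<in>D. \<Sum>j\<in>D. k (y i) (y j))" "(\<Sum>i\<in>D. \<Sum>j\<in>D. k (y i) (y j)) \<le> real (card D) * (real (card D) * Mk)"
    using kb s2' by (auto intro!: sum_nonneg sum_bounded_above[where K="real (card D) * Mk", simplified])
  have "0 \<le> (1/c) * (\<Sum>i\<in>D. \<Sum>j\<in>D. k (y i) (y j))" using s2 c by simp
  moreover have "(1/c) * (\<Sum>i\<in>D. \<Sum>j\<in>D. k (y i) (y j)) \<le> real (card D) * real (card D) * Mk / c"
    using s2 c by (simp add: divide_right_mono field_simps)
  ultimately show ?thesis unfolding KS_def using s1 by linarith
qed

lemma KS_diff_bounds:
  assumes kb: "\<And>u v. 0 \<le> k u v \<and> k u v \<le> Mk" and I: "finite I" "card I = n" "n > 0"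
  and DI: "D \<subseteq> I"
  shows "- 2 * real (card (I - D)) * Mk \<le> KS k I (real n) y - KS k D (real n) y"
    and "KS k I (real n) y - KS k D (real n) y \<le> real (card (I - D)) * Mk"
proof -
  have Mk0: "0 \<le> Mk" using kb[of undefined undefined] by linarith
  have fD: "finite D" using I DI finite_subset by auto
  define d where "d = card D"
  have dn: "d \<le> n" unfolding d_def using I DI card_mono by blast
  have cIDr: "card (I - D) = n - d" unfolding d_def using I DI by (simp add: card_Diff_subset fD)
  define g where "g = (\<lambda>p. k (y (fst p)) (y (snd p)))"
  have g0: "0 \<le> g p" "g p \<le> Mk" for p using kb unfolding g_def by auto
  have ds: "(\<Sum>t\<in>I. k (y t) (y t)) = (\<Sum>t\<in>I - D. k (y t) (y t)) + (\<Sum>t\<in>D. k (y t) (y t))"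
    by (rule sum.subset_diff[OF DI I(1)])
  have dd: "(\<Sum>i\<in>I. \<Sum>j\<in>I. k (y i) (y j)) = (\<Sum>p\<in>I \<times> I - D \<times> D. g p) + (\<Sum>i\<in>D. \<Sum>j\<in>D. k (y i) (y j))"
  proof -
    have "(\<Sum>i\<in>I. \<Sum>j\<in>I. k (y i) (y j)) = (\<Sum>p\<in>I \<times> I. g p)"
      unfolding g_def by (simp add: sum.cartesian_product split_def)
    also have "\<dots> = (\<Sum>p\<in>I \<times> I - D \<times> D. g p) + (\<Sum>p\<in>D \<times> D. g p)"
      by (rule sum.subset_diff) (use DI I in auto)
    also have "(\<Sum>p\<in>D \<times> D. g p) = (\<Sum>i\<in>D. \<Sum>j\<in>D. k (y i) (y j))"
      unfolding g_def by (simp add: sum.cartesian_product split_def)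
    finally show ?thesis .
  qed
  have cc: "card (I \<times> I - D \<times> D) = n * n - d * d"
  proof -
    have "D \<times> D \<subseteq> I \<times> I" using DI by auto
    from card_Diff_subset[OF finite_cartesian_product[OF fD fD] this]
    show ?thesis using I by (simp add: card_cartesian_product d_def)
  qed
  have e1: "0 \<le> (\<Sum>t\<in>I - D. k (y t) (y t))" "(\<Sum>t\<in>I - D. k (y t) (y t)) \<le> real (n - d) * Mk"
    using kb cIDr sum_bounded_above[of "I - D" "\<lambda>t. k (y t) (y t)" Mk] by (auto intro: sum_nonneg)
  have e2: "0 \<le> (\<Sum>p\<in>I \<times> I - D \<times> D. g p)" "(\<Sum>p\<in>I \<times> I - D \<times> D. g p) \<le> real (n * n - d * d) * Mk"
    using g0 cc sum_bounded_above[of "I \<times> I - D \<times> D" g Mk] by (auto intro: sum_nonneg)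
  have nn: "real (n * n - d * d) \<le> 2 * real n * real (n - d)"
  proof -
    have "d * d \<le> n * n" using dn by (simp add: mult_le_mono)
    hence "real (n * n - d * d) = real n * real n - real d * real d" by (simp add: of_nat_diff)
    also have "\<dots> = (real n - real d) * (real n + real d)" by (simp add: algebra_simps)
    also have "\<dots> \<le> (real n - real d) * (2 * real n)" using dn by (intro mult_left_mono) auto
    also have "\<dots> = 2 * real n * real (n - d)" using dn by (simp add: of_nat_diff)
    finally show ?thesis .
  qed
  have diff: "KS k I (real n) y - KS k D (real n) y
       = (\<Sum>t\<in>I - D. k (y t) (y t)) - (1 / real n) * (\<Sum>p\<in>I \<times> I - D \<times> D. g p)"
    unfolding KS_def ds dd by (simp add: algebra_simps)
  have np: "real n > 0" using I by simp
  have "(1 / real n) * (\<Sum>p\<in>I \<times> I - D \<times> D. g p) \<le> (1 / real n) * (2 * real n * real (n - d) * Mk)"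
    using e2(2) nn Mk0 np by (intro mult_left_mono) (auto intro: order.trans mult_right_mono)
  also have "\<dots> = 2 * real (n - d) * Mk" using np by simp
  finally have t1: "(1 / real n) * (\<Sum>p\<in>I \<times> I - D \<times> D. g p) \<le> 2 * real (n - d) * Mk" .
  have t2: "0 \<le> (1 / real n) * (\<Sum>p\<in>I \<times> I - D \<times> D. g p)" using e2(1) np by simp
  show "- 2 * real (card (I - D)) * Mk \<le> KS k I (real n) y - KS k D (real n) y"
    unfolding diff cIDr using e1 t1 by linarith
  show "KS k I (real n) y - KS k D (real n) y \<le> real (card (I - D)) * Mk"
    unfolding diff cIDr using e1 t2 by linarith
qed

definition cc :: "nat \<Rightarrow> nat \<Rightarrow> nat \<Rightarrow> nat" where "cc m n a = min (a * Suc m) n"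

lemma cc_0[simp]: "cc m n 0 = 0" by (simp add: cc_def)
lemma cc_le: "cc m n a \<le> n" by (simp add: cc_def)
lemma cc_n: "cc m n n = n" by (simp add: cc_def)
lemma cc_mono: assumes "a \<le> b" shows "cc m n a \<le> cc m n b"
proof -
  have "a * Suc m \<le> b * Suc m" using assms by (rule mult_le_mono1)
  thus ?thesis unfolding cc_def by (rule min.mono) simp
qed
lemma cc_Suc: "cc m n (Suc a) \<le> cc m n a + Suc m"
  by (simp add: cc_def)
lemma reg_le: "cc m n (a - 1) \<le> min (cc m n a + m) n"
  using cc_mono[of "a - 1" a m n] cc_le[of m n "a-1"] by simp
lemma rr_le1: "min (cc m n a + m) n - cc m n (a - 1) \<le> 2 * m + 1"
proof (cases a)
  case 0 then show ?thesis by simp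
next
  case (Suc b)
  then show ?thesis using cc_Suc[of m n b] by simp
qed
lemma rr_le2: "min (cc m n a + m) n \<le> cc m n (Suc a)"
  by (simp add: cc_def)

lemma tele: "(\<Sum>a=1..N. (f (Suc a) - f (a - 1) :: real)) = f (Suc N) + f N - f 1 - f 0"
  by (induction N) (simp_all add: sum.cl_ivl_Suc)

lemma rr_sum: "(\<Sum>a=1..n. real (min (cc m n a + m) n - cc m n (a - 1))) \<le> 2 * real n"
proof -
  have "(\<Sum>a=1..n. real (min (cc m n a + m) n - cc m n (a - 1)))
        \<le> (\<Sum>a=1..n. real (cc m n (Suc a)) - real (cc m n (a - 1)))"
  proof (rule sum_mono)
    fix a
    have "min (cc m n a + m) n - cc m n (a - 1) \<le> cc m n (Suc a) - cc m n (a - 1)"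
      using rr_le2[of m n a] by linarith
    moreover have "cc m n (a - 1) \<le> cc m n (Suc a)" by (rule cc_mono) simp
    ultimately have "real (min (cc m n a + m) n - cc m n (a - 1)) \<le> real (cc m n (Suc a) - cc m n (a - 1))"
      by (simp only: of_nat_le_iff)
    also have "\<dots> = real (cc m n (Suc a)) - real (cc m n (a - 1))"
      by (rule of_nat_diff) (rule cc_mono, simp)
    finally show "real (min (cc m n a + m) n - cc m n (a - 1)) \<le> real (cc m n (Suc a)) - real (cc m n (a - 1))" .
  qed
  also have "\<dots> = real (cc m n (Suc n)) + real (cc m n n) - real (cc m n 1) - real (cc m n 0)"
    by (rule tele)
  also have "\<dots> \<le> 2 * real n"
  proof -
    have "real (cc m n (Suc n)) \<le> real n" "real (cc m n n) \<le> real n"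
      using cc_le[of m n "Suc n"] cc_le[of m n n] by (simp_all only: of_nat_le_iff)
    moreover have "real (cc m n 1) \<ge> 0" by simp
    ultimately show ?thesis by simp
  qed
  finally show ?thesis .
qed

lemma rr_sq_sum: "(\<Sum>a=1..n. (real (min (cc m n a + m) n - cc m n (a - 1)))\<^sup>2) \<le> 2 * real n * (2 * real m + 1)"
proof -
  have "(\<Sum>a=1..n. (real (min (cc m n a + m) n - cc m n (a - 1)))\<^sup>2)
     \<le> (\<Sum>a=1..n. real (min (cc m n a + m) n - cc m n (a - 1)) * (2 * real m + 1))"
  proof (rule sum_mono)
    fix a
    have "real (min (cc m n a + m) n - cc m n (a - 1)) \<le> 2 * real m + 1"
    proof -
      have "real (min (cc m n a + m) n - cc m n (a - 1)) \<le> real (2 * m + 1)"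
        using rr_le1[of m n a] by (simp only: of_nat_le_iff)
      thus ?thesis by simp
    qed
    then show "(real (min (cc m n a + m) n - cc m n (a - 1)))\<^sup>2 \<le> real (min (cc m n a + m) n - cc m n (a - 1)) * (2 * real m + 1)"
      unfolding power2_eq_square by (rule mult_left_mono) simp
  qed
  also have "\<dots> = (\<Sum>a=1..n. real (min (cc m n a + m) n - cc m n (a - 1))) * (2 * real m + 1)"
    by (rule sum_distrib_right[symmetric])
  also have "\<dots> \<le> 2 * real n * (2 * real m + 1)"
    by (rule mult_right_mono[OF rr_sum]) simp
  finally show ?thesis .
qed

definition mrg :: "nat set \<Rightarrow> (nat \<Rightarrow> 'b) \<Rightarrow> (nat \<Rightarrow> 'b) \<Rightarrow> nat \<Rightarrow> 'b" where
  "mrg P x z = (\<lambda>i. if i \<in> P then x i else z i)"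

lemma mrg_meas:
  assumes "P \<subseteq> I" and "D \<subseteq> P \<union> F" and "t \<in> D"
  shows "(\<lambda>p. mrg P (fst p) (snd p) t) \<in> borel_measurable (PiM I (\<lambda>_. borel) \<Otimes>\<^sub>M PiM F (\<lambda>_. borel))"
proof (cases "t \<in> P")
  case True
  then have tI: "t \<in> I" using assms by auto
  have "(\<lambda>p. fst p t) \<in> borel_measurable (PiM I (\<lambda>_. borel) \<Otimes>\<^sub>M PiM F (\<lambda>_. borel))"
    using measurable_comp[OF measurable_fst measurable_component_singleton[OF tI]] by (simp add: comp_def)
  then show ?thesis using True by (simp add: mrg_def)
next
  case False
  then have tF: "t \<in> F" using assms by auto
  have "(\<lambda>p. snd p t) \<in> borel_measurable (PiM I (\<lambda>_. borel) \<Otimes>\<^sub>M PiM F (\<lambda>_. borel))"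
    using measurable_comp[OF measurable_snd measurable_component_singleton[OF tF]] by (simp add: comp_def)
  then show ?thesis using False by (simp add: mrg_def)
qed

lemma (in prob_space) chat_mgf:
  fixes Y :: "nat \<Rightarrow> 'a \<Rightarrow> 'b::topological_space" and k :: "'b \<Rightarrow> 'b \<Rightarrow> real"
  assumes rv: "\<And>t. t \<in> {1..T} \<Longrightarrow> Y t \<in> borel_measurable M"
  and mdep: "\<And>t. t \<le> T \<Longrightarrow> indep_var (PiM {1..t} (\<lambda>_. borel)) (\<lambda>\<omega>. \<lambda>i\<in>{1..t}. Y i \<omega>)
                 (PiM {t+m+1..T} (\<lambda>_. borel)) (\<lambda>\<omega>. \<lambda>i\<in>{t+m+1..T}. Y i \<omega>)"
  and k_meas: "case_prod k \<in> borel_measurable (borel \<Otimes>\<^sub>M borel)"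
  and k_bnd: "\<And>u v. 0 \<le> k u v \<and> k u v \<le> Mk"
  and se: "1 \<le> s" "s \<le> e" "e \<le> T"
  shows "(\<integral>\<omega>. exp (l * (Chat k Y s e \<omega> - expectation (Chat k Y s e))) \<partial>M)
           \<le> exp (l\<^sup>2 * (9 * Mk\<^sup>2 * (2 * real (e - s + 1) * (2 * real m + 1))) / 8)"
proof -
  define n where "n = e - s + 1"
  have n0: "n > 0" unfolding n_def by simp
  have Ise: "{s..e} = {s..<s+n}" unfolding n_def using se by auto
  have Mk0: "0 \<le> Mk" using k_bnd[of undefined undefined] by linarith
  define Idx where "Idx a = {s..<s + cc m n a}" for a
  define Tp where "Tp (I::nat set) \<omega> = (\<lambda>i\<in>I. Y i \<omega>)" for I \<omega>
  define SP where "SP (I::nat set) = PiM I (\<lambda>_. borel :: 'b measure)" for I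
  define G where "G a = vimage_algebra (space M) (Tp (Idx a)) (SP (Idx a))" for a
  define Far where "Far a = {s + min (cc m n a + m) n ..< s + n}" for a
  define D where "D a = Idx (a - 1) \<union> Far a" for a
  define f where "f = Chat k Y s e"
  define J where "J a \<omega> = KS k (D a) (real n) (\<lambda>t. Y t \<omega>)" for a \<omega>
  define H where "H a \<omega> = f \<omega> - J a \<omega>" for a \<omega>
  define r where "r a = min (cc m n a + m) n - cc m n (a - 1)" for a
  define lo where "lo a = -2 * real (r a) * Mk" for a
  define w where "w a = 3 * real (r a) * Mk" for a
  define BJ where "BJ = real n * Mk + real n * real n * Mk / real n"
  have IdxI: "Idx a \<subseteq> {s..e}" for a unfolding Idx_def Ise using cc_le[of m n a] by auto
  have FarI: "Far a \<subseteq> {s..e}" for a unfolding Far_def Ise by auto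
  have DI: "D a \<subseteq> {s..e}" for a unfolding D_def using IdxI FarI by auto
  have seT: "{s..e} \<subseteq> {1..T}" using se by auto
  have Tmeas: "Tp I \<in> measurable M (SP I)" if "I \<subseteq> {1..T}" for I
    unfolding Tp_def SP_def by (rule measurable_restrict) (use rv that in auto)
  have TmeasIdx: "Tp (Idx a) \<in> measurable M (SP (Idx a))" for a
    using Tmeas IdxI seT by blast
  have subG: "subalgebra M (G a)" for a
    unfolding G_def by (rule subalg_vimage[OF TmeasIdx])
  have TG: "Tp (Idx a) \<in> measurable (G a) (SP (Idx a))" for a
    unfolding G_def by (rule measurable_vimage_algebra1) (use measurable_space[OF TmeasIdx] in blast)
  have nest: "sets (G a) \<subseteq> sets (G b)" if ab: "a \<le> b" for a b
  proof -
    have sub: "Idx a \<subseteq> Idx b" unfolding Idx_def using cc_mono[OF ab, of m n] by auto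
    have "(\<lambda>x. restrict x (Idx a)) \<circ> Tp (Idx b) \<in> measurable (G b) (SP (Idx a))"
      using measurable_comp[OF TG[of b, unfolded SP_def] measurable_restrict_subset[OF sub]] unfolding SP_def .
    moreover have "(\<lambda>x. restrict x (Idx a)) \<circ> Tp (Idx b) = Tp (Idx a)"
      using sub by (auto simp: Tp_def fun_eq_iff restrict_def)
    ultimately have "Tp (Idx a) \<in> measurable (G b) (SP (Idx a))" by simp
    from sets_image_in_sets[OF _ this] show ?thesis
      unfolding G_def by (simp add: G_def)
  qed
  have triv: "A = {} \<or> A = space M" if A: "A \<in> sets (G 0)" for A
  proof -
    have I0: "Idx 0 = {}" unfolding Idx_def by simp
    obtain C where A': "A = Tp (Idx 0) -` C \<inter> space M"
      using A unfolding G_def using sets_vimage_algebra2[of "Tp (Idx 0)" "space M" "SP (Idx 0)"]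
        measurable_space[OF TmeasIdx[of 0]] by auto
    have "Tp (Idx 0) \<omega> = (\<lambda>_. undefined)" for \<omega> unfolding Tp_def I0 by auto
    then show ?thesis unfolding A' by (cases "(\<lambda>_. undefined) \<in> C") auto
  qed
  have fKS: "f \<omega> = KS k {s..e} (real n) (Tp (Idx n) \<omega>)" for \<omega>
  proof -
    have "Idx n = {s..e}" unfolding Idx_def cc_n Ise ..
    then show ?thesis unfolding f_def Chat_KS n_def[symmetric]
      by (intro KS_cong) (simp add: Tp_def)
  qed
  have fG: "f \<in> borel_measurable (G n)"
  proof -
    have "(\<lambda>\<omega>. KS k {s..e} (real n) (Tp (Idx n) \<omega>)) \<in> borel_measurable (G n)"
    proof (rule KS_meas[OF k_meas])
      fix t assume t: "t \<in> {s..e}"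
      have "t \<in> Idx n" using t unfolding Idx_def cc_n Ise .
      from measurable_comp[OF TG[of n, unfolded SP_def] measurable_component_singleton[OF this]]
      show "(\<lambda>\<omega>. Tp (Idx n) \<omega> t) \<in> borel_measurable (G n)" by (simp add: comp_def SP_def)
    qed simp
    then show ?thesis by (simp add: fKS[abs_def])
  qed
  have fM: "f \<in> borel_measurable M" by (rule measurable_from_subalg[OF subG fG])
  have JM: "J a \<in> borel_measurable M" for a
    unfolding J_def[abs_def]
  proof (rule KS_meas[OF k_meas])
    show "finite (D a)" using DI[of a] finite_subset by blast
    fix t assume "t \<in> D a"
    then have "t \<in> {1..T}" using DI[of a] seT by blast
    then show "(\<lambda>x. Y t x) \<in> borel_measurable M" using rv by simp
  qed
  have cardD: "card (D a) \<le> n" for a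
    using card_mono[OF _ DI[of a]] Ise by simp
  have KSb: "\<bar>KS k (D a) (real n) y\<bar> \<le> BJ" for a y
  proof -
    have "\<bar>KS k (D a) (real n) y\<bar> \<le> real (card (D a)) * Mk + real (card (D a)) * real (card (D a)) * Mk / real n"
      by (rule KS_bound[where k=k and Mk=Mk, OF k_bnd]) (use n0 in simp)
    also have "\<dots> \<le> BJ" unfolding BJ_def using cardD[of a] Mk0 n0
      by (intro add_mono divide_right_mono mult_right_mono mult_mono) auto
    finally show ?thesis .
  qed
  have fb: "\<bar>f \<omega>\<bar> \<le> real n * Mk + real n * real n * Mk / real n" for \<omega>
  proof -
    have "\<bar>f \<omega>\<bar> \<le> real (card {s..e}) * Mk + real (card {s..e}) * real (card {s..e}) * Mk / real n"
      unfolding fKS by (rule KS_bound[where k=k and Mk=Mk, OF k_bnd]) (use n0 in simp)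
    also have "card {s..e} = n" unfolding Ise by simp
    finally show ?thesis .
  qed
  have Hb: "lo a \<le> H a \<omega> \<and> H a \<omega> \<le> lo a + w a" if a: "a \<in> {1..n}" for a \<omega>
  proof -
    have diffset: "{s..e} - D a = {s + cc m n (a - 1)..<s + min (cc m n a + m) n}"
      unfolding D_def Idx_def Far_def Ise using reg_le[of m n a] by auto
    have cr: "card ({s..e} - D a) = r a" unfolding diffset r_def by simp
    have HKS: "H a \<omega> = KS k {s..e} (real n) (\<lambda>t. Y t \<omega>) - KS k (D a) (real n) (\<lambda>t. Y t \<omega>)"
      unfolding H_def J_def f_def Chat_KS n_def ..
    have c: "card {s..e} = n" unfolding Ise by simp
    have b1: "- 2 * real (card ({s..e} - D a)) * Mk \<le> KS k {s..e} (real n) (\<lambda>t. Y t \<omega>) - KS k (D a) (real n) (\<lambda>t. Y t \<omega>)"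
      by (rule KS_diff_bounds(1)[where k=k and Mk=Mk, OF k_bnd _ c n0 DI]) simp
    have b2: "KS k {s..e} (real n) (\<lambda>t. Y t \<omega>) - KS k (D a) (real n) (\<lambda>t. Y t \<omega>) \<le> real (card ({s..e} - D a)) * Mk"
      by (rule KS_diff_bounds(2)[where k=k and Mk=Mk, OF k_bnd _ c n0 DI]) simp
    show ?thesis using b1 b2 unfolding HKS cr lo_def w_def by (simp add: mult.commute)
  qed
  have indep_sub: "indep_var (SP I') (Tp I') (SP F') (Tp F')"
    if t: "t \<le> T" and I': "I' \<subseteq> {1..t}" and F': "F' \<subseteq> {t+m+1..T}" for t I' F'
  proof -
    have "indep_var (SP I') ((\<lambda>x. restrict x I') \<circ> (\<lambda>\<omega>. \<lambda>i\<in>{1..t}. Y i \<omega>))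
                    (SP F') ((\<lambda>x. restrict x F') \<circ> (\<lambda>\<omega>. \<lambda>i\<in>{t+m+1..T}. Y i \<omega>))"
      unfolding SP_def
      by (rule indep_var_compose[OF mdep[OF t] measurable_restrict_subset[OF I'] measurable_restrict_subset[OF F']])
    moreover have "(\<lambda>x. restrict x I') \<circ> (\<lambda>\<omega>. \<lambda>i\<in>{1..t}. Y i \<omega>) = Tp I'"
      using I' by (auto simp: Tp_def fun_eq_iff restrict_def)
    moreover have "(\<lambda>x. restrict x F') \<circ> (\<lambda>\<omega>. \<lambda>i\<in>{t+m+1..T}. Y i \<omega>) = Tp F'"
      using F' by (auto simp: Tp_def fun_eq_iff restrict_def)
    ultimately show ?thesis by simp
  qed
  have Jce: "AE x in M. real_cond_exp M (G a) (J a) x = real_cond_exp M (G (a - 1)) (J a) x"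
    if a: "a \<in> {1..n}" for a
  proof -
    define t where "t = s + cc m n a - 1"
    have tT: "t \<le> T" unfolding t_def using cc_le[of m n a] se n_def by linarith
    have Idx_t: "Idx a \<subseteq> {1..t}" unfolding Idx_def t_def using se by auto
    have PI: "Idx (a - 1) \<subseteq> Idx a" unfolding Idx_def using cc_mono[of "a - 1" a m n] by auto
    have Far_t: "Far a \<subseteq> {t+m+1..T}"
    proof
      fix i assume i: "i \<in> Far a"
      then have i1: "s + min (cc m n a + m) n \<le> i" "i < s + n" unfolding Far_def by auto
      then have "cc m n a + m < n" by linarith
      then have "s + cc m n a + m \<le> i" using i1 by linarith
      moreover have "s + cc m n a \<ge> 1" using se by linarith
      ultimately show "i \<in> {t+m+1..T}" unfolding t_def using i1 se n_def by auto
    qed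
    have FarT: "Far a \<subseteq> {1..T}" using FarI seT by blast
    define phi where "phi x z = KS k (D a) (real n) (mrg (Idx (a - 1)) x z)" for x z
    have phim: "case_prod phi \<in> borel_measurable (SP I' \<Otimes>\<^sub>M SP (Far a))" if I': "Idx (a - 1) \<subseteq> I'" for I'
    proof -
      have "(\<lambda>p. KS k (D a) (real n) (mrg (Idx (a - 1)) (fst p) (snd p))) \<in> borel_measurable (SP I' \<Otimes>\<^sub>M SP (Far a))"
      proof (rule KS_meas[OF k_meas])
        show "finite (D a)" using DI[of a] finite_subset by blast
        fix t assume tD: "t \<in> D a"
        have "D a \<subseteq> Idx (a - 1) \<union> Far a" by (simp add: D_def)
        then show "(\<lambda>p. mrg (Idx (a - 1)) (fst p) (snd p) t) \<in> borel_measurable (SP I' \<Otimes>\<^sub>M SP (Far a))"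
          unfolding SP_def by (rule mrg_meas[OF I' _ tD])
      qed
      then show ?thesis by (simp add: phi_def case_prod_beta')
    qed
    have phib: "\<bar>phi x z\<bar> \<le> BJ" for x z unfolding phi_def by (rule KSb)
    have J1: "J a = (\<lambda>\<omega>. phi (Tp (Idx a) \<omega>) (Tp (Far a) \<omega>))"
      unfolding J_def phi_def
      by (intro ext KS_cong) (use PI in \<open>auto simp: mrg_def Tp_def D_def\<close>)
    have J0: "J a = (\<lambda>\<omega>. phi (Tp (Idx (a - 1)) \<omega>) (Tp (Far a) \<omega>))"
      unfolding J_def phi_def
      by (intro ext KS_cong) (auto simp: mrg_def Tp_def D_def)
    have phieq: "phi (Tp (Idx a) \<omega>) z = phi (Tp (Idx (a - 1)) \<omega>) z" for \<omega> z
      unfolding phi_def by (intro KS_cong) (use PI in \<open>auto simp: mrg_def Tp_def\<close>)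
    have ind1: "indep_var (SP (Idx a)) (Tp (Idx a)) (SP (Far a)) (Tp (Far a))"
      by (rule indep_sub[OF tT Idx_t Far_t])
    have ind0: "indep_var (SP (Idx (a - 1))) (Tp (Idx (a - 1))) (SP (Far a)) (Tp (Far a))"
      by (rule indep_sub[OF tT _ Far_t]) (use PI Idx_t in blast)
    have F1: "AE \<omega> in M. real_cond_exp M (G a) (J a) \<omega> = (\<integral>z. phi (Tp (Idx a) \<omega>) z \<partial>distr M (SP (Far a)) (Tp (Far a)))"
      unfolding J1 G_def
      by (rule freeze[OF TmeasIdx Tmeas[OF FarT] ind1 phim[OF PI] phib])
    have F0: "AE \<omega> in M. real_cond_exp M (G (a - 1)) (J a) \<omega> = (\<integral>z. phi (Tp (Idx (a - 1)) \<omega>) z \<partial>distr M (SP (Far a)) (Tp (Far a)))"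
      unfolding J0 G_def
      by (rule freeze[OF TmeasIdx Tmeas[OF FarT] ind0 phim[OF order.refl] phib])
    show ?thesis using F1 F0 by eventually_elim (simp add: phieq)
  qed
  have main: "(\<integral>x. exp (l * (f x - expectation f)) \<partial>M) \<le> exp (l\<^sup>2 * (\<Sum>a=1..n. (w a)\<^sup>2) / 8)"
  proof (rule mg_bound[where G=G and H=H and J=J and lo=lo and w=w and N=n])
    show "subalgebra M (G a)" for a by (rule subG)
    show "sets (G a) \<subseteq> sets (G b)" if "a \<le> b" for a b using nest that by blast
    show "A = {} \<or> A = space M" if "A \<in> sets (G 0)" for A using triv that by blast
    show "f \<in> borel_measurable (G n)" by (rule fG)
    show "\<bar>f x\<bar> \<le> real n * Mk + real n * real n * Mk / real n" for x by (rule fb)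
    show "H a \<in> borel_measurable M" for a unfolding H_def[abs_def] using fM JM by measurable
    show "lo a \<le> H a x \<and> H a x \<le> lo a + w a" if "a \<in> {1..n}" for a x by (rule Hb[OF that])
    show "J a \<in> borel_measurable M" for a by (rule JM)
    show "\<bar>J a x\<bar> \<le> BJ" for a x unfolding J_def by (rule KSb)
    show "f x = H a x + J a x" for a x by (simp add: H_def)
    show "AE x in M. real_cond_exp M (G a) (J a) x = real_cond_exp M (G (a - 1)) (J a) x"
      if "a \<in> {1..n}" for a by (rule Jce[OF that])
  qed
  have "(\<Sum>a=1..n. (w a)\<^sup>2) = 9 * Mk\<^sup>2 * (\<Sum>a=1..n. (real (r a))\<^sup>2)"
    unfolding w_def by (simp add: sum_distrib_left power_mult_distrib mult_ac)
  also have "\<dots> \<le> 9 * Mk\<^sup>2 * (2 * real n * (2 * real m + 1))"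
    unfolding r_def by (rule mult_left_mono[OF rr_sq_sum]) simp
  finally have "l\<^sup>2 * (\<Sum>a=1..n. (w a)\<^sup>2) / 8 \<le> l\<^sup>2 * (9 * Mk\<^sup>2 * (2 * real n * (2 * real m + 1))) / 8"
    by (intro divide_right_mono mult_left_mono) auto
  with main show ?thesis unfolding f_def n_def by (meson exp_le_cancel_iff order.trans)
qed

lemma (in prob_space) chernoff_real:
  assumes g[measurable]: "g \<in> borel_measurable M" and int: "integrable M (\<lambda>\<omega>. exp (l * g \<omega>))" and l: "l > 0"
  shows "measure M {\<omega> \<in> space M. g \<omega> \<ge> x} \<le> exp (-l*x) * (\<integral>\<omega>. exp (l * g \<omega>) \<partial>M)"
proof -
  define A where "A = {\<omega> \<in> space M. g \<omega> \<ge> x}"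
  have A[measurable]: "A \<in> sets M" unfolding A_def by measurable
  have "measure M A = (\<integral>\<omega>. indicator A \<omega> \<partial>M)" by simp
  also have "\<dots> \<le> (\<integral>\<omega>. exp (-l*x) * exp (l * g \<omega>) \<partial>M)"
  proof (rule integral_mono)
    show "integrable M (indicator A :: 'a \<Rightarrow> real)"
      by (rule integrable_const_bound[where B=1]) (auto simp: indicator_def)
    show "integrable M (\<lambda>\<omega>. exp (-l*x) * exp (l * g \<omega>))" using int by simp
    fix \<omega> assume "\<omega> \<in> space M"
    show "indicator A \<omega> \<le> exp (-l*x) * exp (l * g \<omega>)"
    proof (cases "\<omega> \<in> A")
      case True
      then have "l * x \<le> l * g \<omega>" using l unfolding A_def by (simp add: mult_left_mono)
      then have "1 \<le> exp (-l*x) * exp (l * g \<omega>)" by (simp add: exp_add[symmetric])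
      then show ?thesis using True by simp
    qed simp
  qed
  also have "\<dots> = exp (-l*x) * (\<integral>\<omega>. exp (l * g \<omega>) \<partial>M)" by simp
  finally show ?thesis unfolding A_def .
qed

theorem mainTheorem1:
  fixes P :: "'w measure"
    and Y :: "nat \<Rightarrow> 'w \<Rightarrow> real ^ 'd"
    and T K m :: nat
    and \<tau> :: "nat \<Rightarrow> nat"
    and k :: "real ^ 'd \<Rightarrow> real ^ 'd \<Rightarrow> real"
    and Mk :: real
    and s e :: nat
    and x :: real
  assumes prob: "prob_space P"
    and rv: "\<And>t. t \<in> {1..T} \<Longrightarrow> Y t \<in> borel_measurable P"
    and tau0: "\<tau> 0 = 0"
    and tauK: "\<tau> (K + 1) = T"
    and tau_mono: "\<And>i. i \<le> K \<Longrightarrow> \<tau> i < \<tau> (Suc i)"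
    and mdep: "\<And>t. t \<le> T \<Longrightarrow>
        prob_space.indep_var P
          (PiM {1..t} (\<lambda>_. borel)) (\<lambda>\<omega>. \<lambda>i\<in>{1..t}. Y i \<omega>)
          (PiM {t+m+1..T} (\<lambda>_. borel)) (\<lambda>\<omega>. \<lambda>i\<in>{t+m+1..T}. Y i \<omega>)"
    and stat: "\<And>j a b l. j \<in> {1..K+1} \<Longrightarrow>
        \<tau> (j - 1) < a \<Longrightarrow> a + l \<le> \<tau> j \<Longrightarrow> \<tau> (j - 1) < b \<Longrightarrow> b + l \<le> \<tau> j \<Longrightarrow>
        distr P (PiM {0..l} (\<lambda>_. borel)) (\<lambda>\<omega>. \<lambda>i\<in>{0..l}. Y (a + i) \<omega>)
          = distr P (PiM {0..l} (\<lambda>_. borel)) (\<lambda>\<omega>. \<lambda>i\<in>{0..l}. Y (b + i) \<omega>)"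
    and k_meas: "case_prod k \<in> borel_measurable (borel \<Otimes>\<^sub>M borel)"
    and k_pd: "pos_def_kernel k"
    and k_char: "characteristic_kernel k"
    and k_bnd: "\<And>u v. 0 \<le> k u v \<and> k u v \<le> Mk"
    and se: "1 \<le> s" "s \<le> e" "e \<le> T"
    and xpos: "x > 0"
  shows "measure P {\<omega> \<in> space P.
            \<bar>Chat k Y s e \<omega> - prob_space.expectation P (Chat k Y s e)\<bar> > x}
         \<le> 4 * exp (- (x\<^sup>2 / (8 * (8 * real m + 5) * Mk\<^sup>2 * real (e - s + 1))))"
proof -
  interpret prob_space P by (rule prob)
  define n where "n = e - s + 1"
  define f where "f = Chat k Y s e"
  define E where "E = expectation f"
  define V where "V = 8 * (8 * real m + 5) * Mk\<^sup>2 * real n"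
  have Mk0: "0 \<le> Mk" using k_bnd[of undefined undefined] by linarith
  have n0: "n > 0" unfolding n_def by simp
  have set_meas: "{\<omega> \<in> space P. \<bar>f \<omega> - E\<bar> > x} \<subseteq> space P" by auto
  have le1: "measure P {\<omega> \<in> space P. \<bar>f \<omega> - E\<bar> > x} \<le> 1" by (rule prob_le_1)
  show ?thesis
  proof (cases "Mk = 0")
    case True
    have "measure P {\<omega> \<in> space P. \<bar>Chat k Y s e \<omega> - expectation (Chat k Y s e)\<bar> > x} \<le> 1"
      by (rule prob_le_1)
    moreover have "4 * exp (- (x\<^sup>2 / (8 * (8 * real m + 5) * Mk\<^sup>2 * real (e - s + 1)))) = 4"
      using True by simp
    ultimately show ?thesis by linarith
  next
    case False
    then have Mkp: "Mk > 0" using Mk0 by simp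
    have Vp: "V > 0" unfolding V_def using Mkp n0 by simp
    have fKS: "f \<omega> = KS k {s..e} (real n) (\<lambda>t. Y t \<omega>)" for \<omega>
      unfolding f_def Chat_KS n_def ..
    have fM[measurable]: "f \<in> borel_measurable P"
      unfolding fKS[abs_def]
    proof (rule KS_meas[OF k_meas])
      fix t assume "t \<in> {s..e}"
      then have "t \<in> {1..T}" using se by auto
      then show "(\<lambda>\<omega>. Y t \<omega>) \<in> borel_measurable P" using rv by simp
    qed simp
    define Bf where "Bf = real (card {s..e}) * Mk + real (card {s..e}) * real (card {s..e}) * Mk / real n"
    have fb: "\<bar>f \<omega>\<bar> \<le> Bf" for \<omega>
      unfolding fKS Bf_def by (rule KS_bound[where k=k and Mk=Mk, OF k_bnd]) (use n0 in simp)
    have intexp: "integrable P (\<lambda>\<omega>. exp (l * (f \<omega> - E)))" for l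
    proof (rule integrable_const_bound[where B="exp (\<bar>l\<bar> * (Bf + \<bar>E\<bar>))"])
      show "AE \<omega> in P. norm (exp (l * (f \<omega> - E))) \<le> exp (\<bar>l\<bar> * (Bf + \<bar>E\<bar>))"
      proof (rule AE_I2)
        fix \<omega>
        have "\<bar>f \<omega> - E\<bar> \<le> Bf + \<bar>E\<bar>" using fb[of \<omega>] by linarith
        then have "\<bar>l\<bar> * \<bar>f \<omega> - E\<bar> \<le> \<bar>l\<bar> * (Bf + \<bar>E\<bar>)" by (rule mult_left_mono) simp
        moreover have "l * (f \<omega> - E) \<le> \<bar>l\<bar> * \<bar>f \<omega> - E\<bar>" by (metis abs_ge_self abs_mult)
        ultimately show "norm (exp (l * (f \<omega> - E))) \<le> exp (\<bar>l\<bar> * (Bf + \<bar>E\<bar>))" by simp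
      qed
    qed simp
    have mgf: "(\<integral>\<omega>. exp (l * (f \<omega> - E)) \<partial>P) \<le> exp (l\<^sup>2 * (9 * Mk\<^sup>2 * (2 * real n * (2 * real m + 1))) / 8)" for l
      unfolding f_def E_def n_def
      by (rule chat_mgf[where T=T and Mk=Mk, OF rv mdep k_meas k_bnd se])
    have Qle: "9 * Mk\<^sup>2 * (2 * real n * (2 * real m + 1)) \<le> 2 * V"
      unfolding V_def using Mkp n0 by (simp add: algebra_simps)
    define l where "l = 2 * x / V"
    have lp: "l > 0" unfolding l_def using xpos Vp by simp
    have tail: "measure P {\<omega> \<in> space P. g \<omega> \<ge> x} \<le> exp (- (x\<^sup>2 / V))"
      if gdef: "g = (\<lambda>\<omega>. c * (f \<omega> - E))" and c: "c = 1 \<or> c = -1" for g c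
    proof -
      have gM[measurable]: "g \<in> borel_measurable P" unfolding gdef by measurable
      have "measure P {\<omega> \<in> space P. g \<omega> \<ge> x} \<le> exp (-l*x) * (\<integral>\<omega>. exp (l * g \<omega>) \<partial>P)"
        by (rule chernoff_real[OF gM _ lp]) (use intexp[of "l * c"] in \<open>simp add: gdef mult.assoc\<close>)
      also have "(\<integral>\<omega>. exp (l * g \<omega>) \<partial>P) \<le> exp ((l*c)\<^sup>2 * (9 * Mk\<^sup>2 * (2 * real n * (2 * real m + 1))) / 8)"
        using mgf[of "l * c"] by (simp add: gdef mult.assoc)
      also have "\<dots> \<le> exp (l\<^sup>2 * (2 * V) / 8)"
      proof -
        have "(l*c)\<^sup>2 = l\<^sup>2" using c by auto
        moreover have "l\<^sup>2 * (9 * Mk\<^sup>2 * (2 * real n * (2 * real m + 1))) \<le> l\<^sup>2 * (2 * V)"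
          by (rule mult_left_mono[OF Qle]) simp
        ultimately show ?thesis by simp
      qed
      finally have "measure P {\<omega> \<in> space P. g \<omega> \<ge> x} \<le> exp (-l*x) * exp (l\<^sup>2 * (2 * V) / 8)"
        by simp
      also have "\<dots> = exp (-l*x + l\<^sup>2 * (2 * V) / 8)" by (simp only: exp_add)
      also have "-l*x + l\<^sup>2 * (2 * V) / 8 = - (x\<^sup>2 / V)"
        unfolding l_def using Vp by (simp add: field_simps power2_eq_square)
      finally show ?thesis .
    qed
    have t1: "measure P {\<omega> \<in> space P. (\<lambda>\<omega>. 1 * (f \<omega> - E)) \<omega> \<ge> x} \<le> exp (- (x\<^sup>2 / V))"
      by (rule tail[of _ 1]) auto
    have t2: "measure P {\<omega> \<in> space P. (\<lambda>\<omega>. -1 * (f \<omega> - E)) \<omega> \<ge> x} \<le> exp (- (x\<^sup>2 / V))"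
      by (rule tail[of _ "-1"]) auto
    have "measure P {\<omega> \<in> space P. \<bar>f \<omega> - E\<bar> > x}
        \<le> measure P ({\<omega> \<in> space P. (\<lambda>\<omega>. 1 * (f \<omega> - E)) \<omega> \<ge> x} \<union> {\<omega> \<in> space P. (\<lambda>\<omega>. -1 * (f \<omega> - E)) \<omega> \<ge> x})"
      by (rule finite_measure_mono) auto
    also have "\<dots> \<le> measure P {\<omega> \<in> space P. (\<lambda>\<omega>. 1 * (f \<omega> - E)) \<omega> \<ge> x} + measure P {\<omega> \<in> space P. (\<lambda>\<omega>. -1 * (f \<omega> - E)) \<omega> \<ge> x}"
      by (rule measure_Un_le) auto
    also have "\<dots> \<le> 2 * exp (- (x\<^sup>2 / V))" using t1 t2 by simp
    also have "\<dots> \<le> 4 * exp (- (x\<^sup>2 / V))" by simp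
    finally show ?thesis unfolding f_def E_def V_def n_def .
  qed
qed

end
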